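(* Let $q$ be a prime power and $k,\delta,\alpha$ positive integers with $\alpha\ge2$, $\delta\le(\alpha-1)k$ and $(\alpha-1)\mid(\delta-1)$. Then, with $q,k,\delta,\alpha$ fixed and $n\to\infty$, $$B_q(n,k,\delta;\alpha)=\Theta\!\left(q^{\left(k-\frac{\delta-1}{\alpha-1}\right)n}\right).$$
   Context: For a prime power $q$, $\mathcal{G}_q(n,k)$ denotes the set of all $k$-dimensional subspaces of $\mathbb{F}_q^n$. An $\alpha$-$(n,k,\delta)_q^c$ covering Grassmannian code is a subset $\mathcal{C}\subseteq\mathcal{G}_q(n,k)$ (no repeated codewords) such that every set of $\alpha$ distinct codewords of $\mathcal{C}$ spans a subspace of $\mathbb{F}_q^n$ of dimension at least $k+\delta$. $B_q(n,k,\delta;\alpha)$ denotes the maximum size of an $\alpha$-$(n,k,\delta)_q^c$ code. The implied constants in $\Theta(\cdot)$ may depend on $q,k,\delta,\alpha$ but not on $n$. *)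

theory Defs
  imports Complex_Main "HOL-Library.Function_Algebras" "HOL-Library.Landau_Symbols" "HOL-Library.Cardinality"
begin

text \<open>Vectors of F_q^n are represented as functions nat => 'a vanishing outside {..<n};
  the field F_q is a finite field type 'a with q = CARD('a).\<close>

definition fscale :: "'a::field \<Rightarrow> (nat \<Rightarrow> 'a) \<Rightarrow> nat \<Rightarrow> 'a" where
  "fscale c v = (\<lambda>i. c * v i)"

lemma vector_space_fscale: "vector_space (fscale :: 'a::field \<Rightarrow> _)"
  by unfold_locales (auto simp: fscale_def algebra_simps)

definition Fqn :: "nat \<Rightarrow> (nat \<Rightarrow> 'a::field) set" where
  "Fqn n = {v. \<forall>i\<ge>n. v i = 0}"

definition grass :: "nat \<Rightarrow> nat \<Rightarrow> (nat \<Rightarrow> 'a::field) set set" where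
  "grass n k = {U. module.subspace fscale U \<and> U \<subseteq> Fqn n \<and> vector_space.dim fscale U = k}"

definition covering_code :: "nat \<Rightarrow> nat \<Rightarrow> nat \<Rightarrow> nat \<Rightarrow> (nat \<Rightarrow> 'a::field) set set \<Rightarrow> bool" where
  "covering_code n k \<delta> \<alpha> C \<longleftrightarrow> C \<subseteq> grass n k \<and>
     (\<forall>S \<subseteq> C. card S = \<alpha> \<longrightarrow> vector_space.dim fscale (module.span fscale (\<Union>S)) \<ge> k + \<delta>)"

definition Bq :: "'a::{finite,field} itself \<Rightarrow> nat \<Rightarrow> nat \<Rightarrow> nat \<Rightarrow> nat \<Rightarrow> nat" where
  "Bq _ n k \<delta> \<alpha> = Max (card ` {C :: (nat \<Rightarrow> 'a) set set. covering_code n k \<delta> \<alpha> C})"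

end

theory Submission
  imports Defs "HOL-Library.FuncSet"
begin

interpretation V: vector_space "fscale :: 'a::field \<Rightarrow> (nat \<Rightarrow> 'a) \<Rightarrow> nat \<Rightarrow> 'a"
  by (rule vector_space_fscale)

lemma fscale_app[simp]: "fscale c v i = c * v i" by (simp add: fscale_def)

lemma subspace_Fqn: "V.subspace (Fqn n :: (nat \<Rightarrow> 'a::field) set)"
  unfolding V.subspace_def Fqn_def by auto

definition supp_set :: "nat set \<Rightarrow> (nat \<Rightarrow> 'a::zero) set" where
  "supp_set A = {v. \<forall>i. i \<notin> A \<longrightarrow> v i = 0}"

lemma supp_set_card:
  assumes "finite A"
  shows "finite (supp_set A :: (nat \<Rightarrow> 'a::{finite,zero}) set)"
    "card (supp_set A :: (nat \<Rightarrow> 'a::{finite,zero}) set) = CARD('a) ^ card A"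
proof -
  have b: "bij_betw (\<lambda>v. restrict v A) (supp_set A :: (nat \<Rightarrow> 'a) set) (PiE A (\<lambda>_. UNIV))"
  proof (rule bij_betw_byWitness[where f'="\<lambda>f i. if i \<in> A then f i else 0"])
    show "\<forall>a\<in>supp_set A. (\<lambda>i. if i \<in> A then restrict a A i else 0) = a"
      by (auto simp: supp_set_def fun_eq_iff)
    show "\<forall>a'\<in>PiE A (\<lambda>_. UNIV). restrict (\<lambda>i. if i \<in> A then a' i else 0) A = a'"
      by (auto simp: fun_eq_iff PiE_def extensional_def)
    show "(\<lambda>v. restrict v A) ` supp_set A \<subseteq> PiE A (\<lambda>_. UNIV)" by auto
    show "(\<lambda>f i. if i \<in> A then f i else 0) ` PiE A (\<lambda>_. UNIV) \<subseteq> supp_set A"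
      by (auto simp: supp_set_def)
  qed
  have "finite (PiE A (\<lambda>_. UNIV :: 'a set))" using assms by (simp add: finite_PiE)
  then show "finite (supp_set A :: (nat \<Rightarrow> 'a::{finite,zero}) set)"
    using b bij_betw_finite by blast
  have "card (PiE A (\<lambda>_. UNIV :: 'a set)) = CARD('a) ^ card A"
    using assms by (simp add: card_PiE)
  then show "card (supp_set A :: (nat \<Rightarrow> 'a::{finite,zero}) set) = CARD('a) ^ card A"
    using b bij_betw_same_card by metis
qed

lemma Fqn_supp: "Fqn n = supp_set {..<n}"
  by (auto simp: Fqn_def supp_set_def)

lemma Fqn_finite: "finite (Fqn n :: (nat \<Rightarrow> 'a::{finite,field}) set)"
  and Fqn_card: "card (Fqn n :: (nat \<Rightarrow> 'a::{finite,field}) set) = CARD('a) ^ n"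
  using supp_set_card[of "{..<n}", where 'a='a] by (auto simp: Fqn_supp)

lemma span_card:
  assumes "finite S"
  shows "card (V.span S :: (nat \<Rightarrow> 'a::{finite,field}) set) \<le> CARD('a) ^ card S"
proof -
  have "V.span S = (\<lambda>u. \<Sum>v\<in>S. fscale (u v) v) ` (PiE S (\<lambda>_. UNIV))"
  proof -
    have "V.span S = range (\<lambda>u. \<Sum>v\<in>S. fscale (u v) v)" using V.span_finite[OF assms] .
    also have "\<dots> = (\<lambda>u. \<Sum>v\<in>S. fscale (u v) v) ` (PiE S (\<lambda>_. UNIV))"
    proof
      show "range (\<lambda>u. \<Sum>v\<in>S. fscale (u v) v) \<subseteq> (\<lambda>u. \<Sum>v\<in>S. fscale (u v) v) ` (PiE S (\<lambda>_. UNIV))"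
      proof
        fix x assume "x \<in> range (\<lambda>u. \<Sum>v\<in>S. fscale (u v) v)"
        then obtain u where x: "x = (\<Sum>v\<in>S. fscale (u v) v)" by auto
        have "x = (\<Sum>v\<in>S. fscale (restrict u S v) v)" unfolding x
          by (rule sum.cong) auto
        moreover have "restrict u S \<in> PiE S (\<lambda>_. UNIV)" by auto
        ultimately show "x \<in> (\<lambda>u. \<Sum>v\<in>S. fscale (u v) v) ` (PiE S (\<lambda>_. UNIV))" by blast
      qed
    qed auto
    finally show ?thesis .
  qed
  then have "card (V.span S) \<le> card (PiE S (\<lambda>_. UNIV :: 'a set))"
    by (simp add: card_image_le assms finite_PiE)
  also have "\<dots> = CARD('a) ^ card S" using assms by (simp add: card_PiE)
  finally show ?thesis .
qed

lemma grass_finite: "finite (grass n k :: (nat \<Rightarrow> 'a::{finite,field}) set set)"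
proof -
  have "grass n k \<subseteq> Pow (Fqn n :: (nat \<Rightarrow> 'a) set)" by (auto simp: grass_def)
  then show ?thesis using Fqn_finite finite_Pow_iff finite_subset by metis
qed

lemma grass_basis_list:
  assumes "U \<in> grass n k"
  shows "\<exists>xs. set xs \<subseteq> (U :: (nat \<Rightarrow> 'a::{finite,field}) set) \<and> length xs = k \<and> U \<subseteq> V.span (set xs)"
proof -
  from assms have d: "V.dim U = k" and UF: "U \<subseteq> Fqn n" by (auto simp: grass_def)
  obtain B where B: "B \<subseteq> U" "V.independent B" "U \<subseteq> V.span B" "card B = V.dim U"
    using V.basis_exists by blast
  have "finite B" using B(1) UF Fqn_finite finite_subset by metis
  then obtain xs where xs: "set xs = B" "distinct xs" using finite_distinct_list by blast
  then have "length xs = k" using B(4) d distinct_card by metis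
  then show ?thesis using xs B by auto
qed

definition blist :: "(nat \<Rightarrow> 'a::field) set \<Rightarrow> nat \<Rightarrow> (nat \<Rightarrow> 'a) list" where
  "blist U k = (SOME xs. set xs \<subseteq> U \<and> length xs = k \<and> U \<subseteq> V.span (set xs))"

lemma blist:
  assumes "U \<in> grass n k"
  shows "set (blist U k) \<subseteq> (U :: (nat \<Rightarrow> 'a::{finite,field}) set)" "length (blist U k) = k"
    "U \<subseteq> V.span (set (blist U k))"
  using someI_ex[OF grass_basis_list[OF assms]] unfolding blist_def by auto

lemma upper_bound:
  fixes C :: "(nat \<Rightarrow> 'a::{finite,field}) set set"
  assumes cc: "covering_code n k \<delta> \<alpha> C" and a2: "2 \<le> \<alpha>" and dt: "\<delta> = (\<alpha> - 1) * t + 1"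
    and tk: "t < k"
  shows "card C \<le> (\<alpha> - 1) * (CARD('a) ^ n) ^ (k - t)"
proof -
  define p where "p = k - t"
  define L where "L = {xs. set xs \<subseteq> (Fqn n :: (nat \<Rightarrow> 'a) set) \<and> length xs = p}"
  define fib where "fib ys = {U \<in> C. take p (blist U k) = ys}" for ys
  have CG: "C \<subseteq> grass n k" using cc by (simp add: covering_code_def)
  have finC: "finite C" using CG grass_finite finite_subset by metis
  have finL: "finite L" unfolding L_def using Fqn_finite[where 'a='a] by (simp add: finite_lists_length_eq)
  have cardL: "card L = (CARD('a) ^ n) ^ p" unfolding L_def
    using Fqn_finite[where 'a='a] Fqn_card[where 'a='a] by (simp add: card_lists_length_eq)
  have fibsmall: "card (fib ys) \<le> \<alpha> - 1" for ys
  proof (rule ccontr)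
    assume "\<not> card (fib ys) \<le> \<alpha> - 1"
    then have "\<alpha> \<le> card (fib ys)" by simp
    then obtain S where S: "S \<subseteq> fib ys" "card S = \<alpha>" using obtain_subset_with_card_n by metis
    have SC: "S \<subseteq> C" using S unfolding fib_def by auto
    have fS: "finite S" using SC finC finite_subset by metis
    define Z where "Z = set ys \<union> (\<Union>U\<in>S. set (drop p (blist U k)))"
    have fZ: "finite Z" unfolding Z_def using fS by auto
    have "card Z \<le> card (set ys) + card (\<Union>U\<in>S. set (drop p (blist U k)))"
      unfolding Z_def by (rule card_Un_le)
    also have "card (set ys) \<le> p"
    proof -
      obtain U where "U \<in> S" using S a2 by fastforce
      then have "ys = take p (blist U k)" "U \<in> grass n k" using S CG unfolding fib_def by auto
      then have "length ys \<le> p" by simp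
      then show ?thesis using card_length le_trans by blast
    qed
    also have "card (\<Union>U\<in>S. set (drop p (blist U k))) \<le> (\<Sum>U\<in>S. card (set (drop p (blist U k))))"
      by (rule card_UN_le[OF fS])
    also have "\<dots> \<le> (\<Sum>U\<in>S. t)"
    proof (rule sum_mono)
      fix U assume "U \<in> S"
      then have "U \<in> grass n k" using SC CG by auto
      then have "length (drop p (blist U k)) = t" using blist(2)[OF \<open>U \<in> grass n k\<close>] tk p_def by auto
      then show "card (set (drop p (blist U k))) \<le> t" using card_length by metis
    qed
    also have "(\<Sum>U\<in>S. t) = \<alpha> * t" using S by simp
    finally have cZ: "card Z \<le> p + \<alpha> * t" by simp
    have "\<Union>S \<subseteq> V.span Z"
    proof
      fix x assume "x \<in> \<Union>S"
      then obtain U where U: "U \<in> S" "x \<in> U" by auto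
      then have G: "U \<in> grass n k" and ys: "take p (blist U k) = ys" using SC CG S unfolding fib_def by auto
      have "set (blist U k) = set (take p (blist U k)) \<union> set (drop p (blist U k))"
        by (metis append_take_drop_id set_append)
      also have "\<dots> \<subseteq> Z" unfolding Z_def using U ys by auto
      finally have "V.span (set (blist U k)) \<subseteq> V.span Z" by (rule V.span_mono)
      then show "x \<in> V.span Z" using blist(3)[OF G] U by auto
    qed
    then have "V.dim (\<Union>S) \<le> card Z" using V.dim_le_card fZ by blast
    then have "V.dim (V.span (\<Union>S)) \<le> p + \<alpha> * t" using cZ by simp
    moreover have "k + \<delta> \<le> V.dim (V.span (\<Union>S))"
      using cc SC S unfolding covering_code_def by blast
    moreover have "p + \<alpha> * t = k + (\<alpha> - 1) * t"
    proof -
      obtain b where b: "\<alpha> = Suc b" using a2 by (cases \<alpha>) auto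
      then have "p + \<alpha> * t = (k - t) + (t + b * t)" unfolding p_def by simp
      then show ?thesis using tk b by simp
    qed
    ultimately show False using dt by linarith
  qed
  have "C \<subseteq> (\<Union>ys\<in>L. fib ys)"
  proof
    fix U assume U: "U \<in> C"
    then have G: "U \<in> grass n k" using CG by auto
    have "set (take p (blist U k)) \<subseteq> Fqn n"
    proof -
      have "set (blist U k) \<subseteq> Fqn n" using blist(1)[OF G] G unfolding grass_def by auto
      then show ?thesis by (meson order_trans set_take_subset)
    qed
    moreover have "length (take p (blist U k)) = p" using blist(2)[OF G] p_def by simp
    ultimately show "U \<in> (\<Union>ys\<in>L. fib ys)" unfolding L_def fib_def using U by auto
  qed
  then have "card C \<le> card (\<Union>ys\<in>L. fib ys)"
    by (intro card_mono) (auto intro: finite_subset[OF _ finC] simp: fib_def finL)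
  also have "\<dots> \<le> (\<Sum>ys\<in>L. card (fib ys))" by (rule card_UN_le[OF finL])
  also have "\<dots> \<le> (\<Sum>ys\<in>L. \<alpha> - 1)" by (rule sum_mono) (rule fibsmall)
  also have "\<dots> = (\<alpha> - 1) * (CARD('a) ^ n) ^ p" using cardL by simp
  finally show ?thesis unfolding p_def .
qed

lemma sum_fun_apply: "(sum f S) i = (\<Sum>v\<in>S. f v i)"
  for f :: "'b \<Rightarrow> nat \<Rightarrow> 'a::comm_monoid_add"
  by (induction S rule: infinite_finite_induct) auto

definition ev :: "nat \<Rightarrow> nat \<Rightarrow> 'a::field" where
  "ev j = (\<lambda>i. if i = j then 1 else 0)"

definition row :: "(nat \<Rightarrow> nat \<Rightarrow> 'a::field) \<Rightarrow> nat \<Rightarrow> nat \<Rightarrow> 'a" where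
  "row ms j = ev j + ms j"

definition Rset :: "nat \<Rightarrow> nat \<Rightarrow> (nat \<Rightarrow> 'a::field) set" where
  "Rset k n = supp_set {k..<n}"

definition Pset :: "nat \<Rightarrow> nat \<Rightarrow> (nat \<Rightarrow> nat \<Rightarrow> 'a::field) set" where
  "Pset k n = PiE {..<k} (\<lambda>_. Rset k n)"

lemma row_coord:
  assumes "ms \<in> Pset k n" "j < k" "l < k"
  shows "row ms j l = (if l = j then 1 else 0)"
proof -
  have "ms j \<in> Rset k n" using assms by (auto simp: Pset_def)
  then have "ms j l = 0" using assms(3) by (auto simp: Rset_def supp_set_def)
  then show ?thesis by (simp add: row_def ev_def)
qed

lemma row_inj: assumes "ms \<in> Pset k n" shows "inj_on (row ms) {..<k}"
proof (rule inj_onI)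
  fix j l assume "j \<in> {..<k}" "l \<in> {..<k}" "row ms j = row ms l"
  then have "row ms j j = row ms l j" by simp
  then show "j = l" using row_coord[OF assms] \<open>j \<in> _\<close> \<open>l \<in> _\<close> by (auto split: if_splits)
qed

lemma sum_rows_coord:
  assumes "ms \<in> Pset k n" "l < k"
  shows "(\<Sum>j<k. fscale (c j) (row ms j)) l = c l"
proof -
  have "(\<Sum>j<k. fscale (c j) (row ms j)) l = (\<Sum>j<k. c j * row ms j l)"
    by (simp add: sum_fun_apply)
  also have "\<dots> = (\<Sum>j<k. if j = l then c j else 0)"
    by (rule sum.cong) (auto simp: row_coord[OF assms(1) _ assms(2)])
  also have "\<dots> = c l" using assms(2) by simp
  finally show ?thesis .
qed

lemma span_rows_repr:
  assumes "ms \<in> Pset k n" "x \<in> V.span (row ms ` {..<k})"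
  shows "x = (\<Sum>j<k. fscale (x j) (row ms j))"
  using assms(2)
proof (induction rule: V.span_induct_alt)
  case base
  then show ?case by (simp add: fscale_def fun_eq_iff sum_fun_apply)
next
  case (step c x y)
  then obtain l where l: "l < k" "x = row ms l" by auto
  have "(\<Sum>j<k. fscale ((fscale c x + y) j) (row ms j))
     = fscale c (\<Sum>j<k. fscale (x j) (row ms j)) + (\<Sum>j<k. fscale (y j) (row ms j))"
    by (simp add: fun_eq_iff sum_fun_apply fscale_def sum_distrib_left sum.distrib distrib_right mult.assoc)
  also have "(\<Sum>j<k. fscale (x j) (row ms j)) = x"
  proof -
    have "(\<Sum>j<k. fscale (x j) (row ms j)) = (\<Sum>j<k. if j = l then row ms l else 0)"
      by (rule sum.cong) (auto simp: l row_coord[OF assms(1)] fscale_def fun_eq_iff)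
    then show ?thesis using l by simp
  qed
  also have "(\<Sum>j<k. fscale (y j) (row ms j)) = y" using step(2) by (rule sym)
  finally show ?case by (rule sym)
qed

lemma rows_independent:
  assumes "ms \<in> Pset k n"
  shows "V.independent (row ms ` {..<k})"
  unfolding V.independent_explicit_module
proof (intro allI impI)
  fix T u v
  assume T: "finite T" "T \<subseteq> row ms ` {..<k}" "(\<Sum>v\<in>T. fscale (u v) v) = 0" "v \<in> T"
  then obtain l where l: "l < k" "v = row ms l" by auto
  have "0 = (\<Sum>w\<in>T. fscale (u w) w) l" using T by simp
  also have "\<dots> = (\<Sum>w\<in>T. u w * w l)" by (simp add: sum_fun_apply)
  also have "\<dots> = (\<Sum>w\<in>T. if w = v then u w else 0)"
  proof (rule sum.cong[OF refl])
    fix w assume "w \<in> T"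
    then obtain j where j: "j < k" "w = row ms j" using T by auto
    have "w = v \<longleftrightarrow> j = l" using row_inj[OF assms] j l by (auto dest: inj_onD)
    then show "u w * w l = (if w = v then u w else 0)"
      using j l by (simp add: row_coord[OF assms])
  qed
  also have "\<dots> = u v" using T by simp
  finally show "u v = 0" by simp
qed

definition Phi :: "(nat \<Rightarrow> nat \<Rightarrow> 'a::field) \<Rightarrow> nat \<Rightarrow> (nat \<Rightarrow> 'a) set" where
  "Phi ms k = V.span (row ms ` {..<k})"

lemma Phi_grass:
  assumes "ms \<in> Pset k n" "k \<le> n"
  shows "Phi ms k \<in> grass n k"
proof -
  have "row ms ` {..<k} \<subseteq> Fqn n"
  proof
    fix x assume "x \<in> row ms ` {..<k}"
    then obtain j where j: "j < k" "x = row ms j" by auto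
    have "ms j \<in> Rset k n" using assms j by (auto simp: Pset_def)
    then show "x \<in> Fqn n" using j assms(2)
      by (auto simp: Fqn_def row_def ev_def Rset_def supp_set_def)
  qed
  then have "Phi ms k \<subseteq> Fqn n" unfolding Phi_def using V.span_minimal subspace_Fqn by blast
  moreover have "V.dim (Phi ms k) = k" unfolding Phi_def
    using V.dim_span_eq_card_independent[OF rows_independent[OF assms(1)]]
      card_image[OF row_inj[OF assms(1)]] by simp
  ultimately show ?thesis unfolding grass_def Phi_def by auto
qed

lemma Phi_inj: "inj_on (\<lambda>ms. Phi ms k) (Pset k n)"
proof (rule inj_onI)
  fix ms ms' assume a: "ms \<in> Pset k n" "ms' \<in> Pset k n" "Phi ms k = Phi ms' k"
  show "ms = ms'"
  proof
    fix j show "ms j = ms' j"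
    proof (cases "j < k")
      case True
      have "row ms' j \<in> Phi ms k" using a True unfolding Phi_def by (auto intro: V.span_base)
      then have "row ms' j = (\<Sum>l<k. fscale (row ms' j l) (row ms l))"
        using span_rows_repr[OF a(1)] unfolding Phi_def by blast
      also have "\<dots> = (\<Sum>l<k. if l = j then row ms j else 0)"
        by (rule sum.cong) (auto simp: row_coord[OF a(2) True] fscale_def fun_eq_iff)
      also have "\<dots> = row ms j" using True by simp
      finally have "ev j + ms' j = ev j + ms j" by (simp only: row_def)
      then show ?thesis by simp
    next
      case False then show ?thesis using a by (auto simp: Pset_def PiE_def extensional_def)
    qed
  qed
qed

lemma grass_card_lower:
  assumes "k \<le> n"
  shows "(CARD('a::{finite,field}) ^ (n - k)) ^ k \<le> card (grass n k :: (nat \<Rightarrow> 'a) set set)"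
proof -
  have cR: "card (Rset k n :: (nat \<Rightarrow> 'a) set) = CARD('a) ^ (n - k)"
    unfolding Rset_def using supp_set_card[of "{k..<n}", where 'a='a] by simp
  have cP: "card (Pset k n :: (nat \<Rightarrow> nat \<Rightarrow> 'a) set) = (CARD('a) ^ (n - k)) ^ k"
    unfolding Pset_def by (simp add: card_PiE cR)
  have "card ((\<lambda>ms. Phi ms k) ` (Pset k n :: (nat \<Rightarrow> nat \<Rightarrow> 'a) set)) = card (Pset k n :: (nat \<Rightarrow> nat \<Rightarrow> 'a) set)"
    by (rule card_image[OF Phi_inj])
  moreover have "card ((\<lambda>ms. Phi ms k) ` (Pset k n :: (nat \<Rightarrow> nat \<Rightarrow> 'a) set)) \<le> card (grass n k :: (nat \<Rightarrow> 'a) set set)"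
    by (rule card_mono[OF grass_finite]) (auto intro: Phi_grass[OF _ assms])
  ultimately show ?thesis using cP by simp
qed

lemma binom_ineq:
  "a \<le> s \<Longrightarrow> s \<le> m \<Longrightarrow> ((m - a) choose (s - a)) * m ^ a \<le> (m choose s) * s ^ a"
proof (induction a arbitrary: m s)
  case 0 then show ?case by simp
next
  case (Suc a)
  obtain s' where s': "s = Suc s'" using Suc.prems by (cases s) auto
  obtain m' where m': "m = Suc m'" using Suc.prems s' by (cases m) auto
  have as: "a \<le> s'" "s' \<le> m'" using Suc.prems s' m' by auto
  define X where "X = (m' - a) choose (s' - a)"
  define B where "B = m' choose s'"
  have IH: "X * m' ^ a \<le> B * s' ^ a" using Suc.IH[OF as] unfolding X_def B_def .
  have id: "Suc m' * B = (Suc m' choose Suc s') * Suc s'" unfolding B_def by (rule Suc_times_binomial_eq)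
  have pm: "s' ^ a * Suc m' ^ a \<le> Suc s' ^ a * m' ^ a"
  proof -
    have "s' * Suc m' \<le> Suc s' * m'" using as by simp
    then have "(s' * Suc m') ^ a \<le> (Suc s' * m') ^ a" by (rule power_mono) simp
    then show ?thesis by (metis power_mult_distrib)
  qed
  have pos: "0 < m' ^ a" using as by (cases "m' = 0") auto
  have "X * Suc m' ^ a * m' ^ a = (X * m' ^ a) * Suc m' ^ a" by (simp add: ac_simps)
  also have "\<dots> \<le> (B * s' ^ a) * Suc m' ^ a" using IH by (rule mult_right_mono) simp
  also have "\<dots> = B * (s' ^ a * Suc m' ^ a)" by (simp add: ac_simps)
  also have "\<dots> \<le> B * (Suc s' ^ a * m' ^ a)" using pm by (rule mult_left_mono) simp
  finally have "X * Suc m' ^ a * m' ^ a \<le> (B * Suc s' ^ a) * m' ^ a" by (simp add: ac_simps)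
  then have key: "X * Suc m' ^ a \<le> B * Suc s' ^ a" by (metis mult_le_cancel2 pos)
  have "(m - Suc a choose (s - Suc a)) * m ^ Suc a = Suc m' * (X * Suc m' ^ a)"
    unfolding X_def s' m' by (simp add: algebra_simps)
  also have "\<dots> \<le> Suc m' * (B * Suc s' ^ a)" using key by (rule mult_left_mono) simp
  also have "\<dots> = (Suc m' * B) * Suc s' ^ a" by (simp add: algebra_simps)
  also have "\<dots> = (Suc m' choose Suc s') * Suc s' * Suc s' ^ a" by (simp only: id)
  also have "\<dots> = (m choose s) * s ^ Suc a" unfolding s' m' power_Suc by (simp only: mult.assoc)
  finally show ?case .
qed

lemma card_supersets:
  assumes "finite V" "T \<subseteq> V" "card T = a" "a \<le> s"
  shows "card {F. F \<subseteq> V \<and> card F = s \<and> T \<subseteq> F} = (card V - a) choose (s - a)"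
proof -
  have fT: "finite T" using assms finite_subset by blast
  have "bij_betw (\<lambda>F. F - T) {F. F \<subseteq> V \<and> card F = s \<and> T \<subseteq> F} {G. G \<subseteq> V - T \<and> card G = s - a}"
  proof (rule bij_betw_byWitness[where f'="\<lambda>G. G \<union> T"])
    show "\<forall>F\<in>{F. F \<subseteq> V \<and> card F = s \<and> T \<subseteq> F}. F - T \<union> T = F" by auto
    show "\<forall>G\<in>{G. G \<subseteq> V - T \<and> card G = s - a}. G \<union> T - T = G" by auto
    show "(\<lambda>F. F - T) ` {F. F \<subseteq> V \<and> card F = s \<and> T \<subseteq> F} \<subseteq> {G. G \<subseteq> V - T \<and> card G = s - a}"
    proof
      fix G assume "G \<in> (\<lambda>F. F - T) ` {F. F \<subseteq> V \<and> card F = s \<and> T \<subseteq> F}"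
      then obtain F where F: "F \<subseteq> V" "card F = s" "T \<subseteq> F" "G = F - T" by auto
      have "finite F" using F assms finite_subset by blast
      then have "card G = s - a" using F assms card_Diff_subset fT by metis
      then show "G \<in> {G. G \<subseteq> V - T \<and> card G = s - a}" using F by auto
    qed
    show "(\<lambda>G. G \<union> T) ` {G. G \<subseteq> V - T \<and> card G = s - a} \<subseteq> {F. F \<subseteq> V \<and> card F = s \<and> T \<subseteq> F}"
    proof
      fix F assume "F \<in> (\<lambda>G. G \<union> T) ` {G. G \<subseteq> V - T \<and> card G = s - a}"
      then obtain G where G: "G \<subseteq> V - T" "card G = s - a" "F = G \<union> T" by auto
      have "finite G" using G assms finite_subset by blast
      moreover have "G \<inter> T = {}" using G by auto
      ultimately have "card F = s - a + a" using G assms fT card_Un_disjoint by metis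
      then show "F \<in> {F. F \<subseteq> V \<and> card F = s \<and> T \<subseteq> F}" using G assms by auto
    qed
  qed
  then have "card {F. F \<subseteq> V \<and> card F = s \<and> T \<subseteq> F} = card {G. G \<subseteq> V - T \<and> card G = s - a}"
    by (rule bij_betw_same_card)
  also have "\<dots> = card (V - T) choose (s - a)" using assms by (simp add: n_subsets)
  also have "card (V - T) = card V - a" using assms fT by (simp add: card_Diff_subset)
  finally show ?thesis .
qed

lemma deletion:
  fixes V :: "'b set" and Bad :: "'b set set"
  assumes fV: "finite V" and BadV: "Bad \<subseteq> {T. T \<subseteq> V \<and> card T = a}" and a1: "1 \<le> a"
    and as: "a \<le> s" and sm: "s \<le> card V"
    and cond: "2 * card Bad * s ^ a \<le> s * card V ^ a"
  shows "\<exists>F \<subseteq> V. s \<le> 2 * card F \<and> (\<forall>T\<in>Bad. \<not> T \<subseteq> F)"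
proof -
  define m where "m = card V"
  define Sub where "Sub = {F. F \<subseteq> V \<and> card F = s}"
  define nb where "nb F = card {T\<in>Bad. T \<subseteq> F}" for F
  define C where "C = (m - a) choose (s - a)"
  have fSub: "finite Sub" unfolding Sub_def using fV by simp
  have cSub: "card Sub = m choose s" unfolding Sub_def m_def using fV by (simp add: n_subsets)
  have Subpos: "0 < card Sub" using cSub sm m_def by simp
  have fBad: "finite Bad"
  proof -
    have "Bad \<subseteq> Pow V" using BadV by auto
    then show ?thesis using fV finite_subset by blast
  qed
  have nbsum: "nb F = (\<Sum>T\<in>Bad. if T \<subseteq> F then 1 else 0)" for F
    unfolding nb_def using fBad by (simp add: sum.If_cases Int_def)
  have "(\<Sum>F\<in>Sub. nb F) = (\<Sum>T\<in>Bad. \<Sum>F\<in>Sub. if T \<subseteq> F then 1 else 0)"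
    unfolding nbsum by (rule sum.swap)
  also have "\<dots> = (\<Sum>T\<in>Bad. C)"
  proof (rule sum.cong[OF refl])
    fix T assume T: "T \<in> Bad"
    have "(\<Sum>F\<in>Sub. if T \<subseteq> F then 1 else 0) = card {F\<in>Sub. T \<subseteq> F}"
      using fSub by (simp add: sum.If_cases Int_def)
    also have "{F\<in>Sub. T \<subseteq> F} = {F. F \<subseteq> V \<and> card F = s \<and> T \<subseteq> F}" unfolding Sub_def by auto
    also have "card \<dots> = C" unfolding C_def m_def
      using card_supersets[OF fV _ _ as] T BadV by auto
    finally show "(\<Sum>F\<in>Sub. if T \<subseteq> F then 1 else 0) = C" .
  qed
  also have "\<dots> = card Bad * C" by simp
  finally have tot: "(\<Sum>F\<in>Sub. nb F) = card Bad * C" .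
  have "\<exists>F\<in>Sub. nb F * card Sub \<le> card Bad * C"
  proof (rule ccontr)
    assume "\<not> ?thesis"
    then have lt: "\<And>F. F \<in> Sub \<Longrightarrow> card Bad * C < nb F * card Sub" by force
    have "Sub \<noteq> {}" using Subpos by auto
    then have "(\<Sum>F\<in>Sub. card Bad * C) < (\<Sum>F\<in>Sub. nb F * card Sub)"
      using fSub lt by (intro sum_strict_mono) auto
    also have "\<dots> = (\<Sum>F\<in>Sub. nb F) * card Sub" by (rule sum_distrib_right[symmetric])
    also have "\<dots> = card Sub * (card Bad * C)" using tot by simp
    finally show False by simp
  qed
  then obtain F where F: "F \<in> Sub" "nb F * card Sub \<le> card Bad * C" by blast
  have bi: "C * m ^ a \<le> (m choose s) * s ^ a" unfolding C_def using binom_ineq[OF as] sm m_def by simp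
  have "nb F * card Sub * m ^ a \<le> card Bad * C * m ^ a" using F(2) by (rule mult_right_mono) simp
  also have "\<dots> = card Bad * (C * m ^ a)" by simp
  also have "\<dots> \<le> card Bad * ((m choose s) * s ^ a)" using bi by (rule mult_left_mono) simp
  finally have "card Sub * (nb F * m ^ a) \<le> card Sub * (card Bad * s ^ a)" using cSub by (simp add: ac_simps)
  then have nb1: "nb F * m ^ a \<le> card Bad * s ^ a" using Subpos by simp
  have mpos: "0 < m ^ a" using as sm a1 m_def by simp
  have "2 * nb F * m ^ a \<le> 2 * card Bad * s ^ a" using nb1 by simp
  also have "\<dots> \<le> s * m ^ a" using cond m_def by simp
  finally have "2 * nb F * m ^ a \<le> s * m ^ a" .
  then have nb2: "2 * nb F \<le> s" by (metis mult_le_cancel2 mpos)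
  define D where "D = (\<lambda>T. SOME x. x \<in> T) ` {T\<in>Bad. T \<subseteq> F}"
  define F' where "F' = F - D"
  have fF: "finite F" using F(1) fV unfolding Sub_def using finite_subset by blast
  have cD: "card D \<le> nb F" unfolding D_def nb_def
    by (rule card_image_le) (use fBad in auto)
  have "card F - card D \<le> card F'" unfolding F'_def by (rule diff_card_le_card_Diff) (use fBad in \<open>auto simp: D_def\<close>)
  then have "s \<le> 2 * card F'" using cD nb2 F(1) unfolding Sub_def by auto
  moreover have "F' \<subseteq> V" using F(1) unfolding F'_def Sub_def by auto
  moreover have "\<forall>T\<in>Bad. \<not> T \<subseteq> F'"
  proof (intro ballI notI)
    fix T assume T: "T \<in> Bad" "T \<subseteq> F'"
    have "T \<noteq> {}" using T BadV a1 by auto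
    then have "(SOME x. x \<in> T) \<in> T" by (simp add: some_in_eq)
    moreover have "(SOME x. x \<in> T) \<in> D" unfolding D_def using T unfolding F'_def by auto
    ultimately show False using T unfolding F'_def by auto
  qed
  ultimately show ?thesis by blast
qed

definition Gw :: "(nat \<Rightarrow> 'a::field) list \<Rightarrow> nat \<Rightarrow> (nat \<Rightarrow> 'a) set set" where
  "Gw ws k = (\<lambda>xs. V.span (set xs)) ` {xs. set xs \<subseteq> V.span (set ws) \<and> length xs = k}"

lemma span_sub_Fqn: "S \<subseteq> Fqn n \<Longrightarrow> V.span S \<subseteq> Fqn n"
  using V.span_minimal subspace_Fqn by blast

lemma Gw_card:
  assumes "set ws \<subseteq> (Fqn n :: (nat \<Rightarrow> 'a::{finite,field}) set)" "length ws = d"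
  shows "card (Gw ws k) \<le> (CARD('a) ^ d) ^ k"
proof -
  have fs: "finite (V.span (set ws))" using span_sub_Fqn[OF assms(1)] Fqn_finite finite_subset by blast
  have "card (Gw ws k) \<le> card {xs. set xs \<subseteq> V.span (set ws) \<and> length xs = k}"
    unfolding Gw_def by (rule card_image_le) (simp add: fs finite_lists_length_eq)
  also have "\<dots> = card (V.span (set ws)) ^ k" using fs by (simp add: card_lists_length_eq)
  also have "\<dots> \<le> (CARD('a) ^ d) ^ k"
  proof (rule power_mono)
    have "card (V.span (set ws)) \<le> CARD('a) ^ card (set ws)" by (rule span_card) simp
    also have "\<dots> \<le> CARD('a) ^ d" using assms(2) card_length
      by (intro power_increasing) (auto simp: Suc_le_eq)
    finally show "card (V.span (set ws)) \<le> CARD('a) ^ d" .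
  qed simp
  finally show ?thesis .
qed

definition BadS :: "nat \<Rightarrow> nat \<Rightarrow> nat \<Rightarrow> nat \<Rightarrow> (nat \<Rightarrow> 'a::field) set set set" where
  "BadS n k \<delta> \<alpha> = {T. T \<subseteq> grass n k \<and> card T = \<alpha> \<and> V.dim (V.span (\<Union>T)) < k + \<delta>}"

lemma bad_in_Gw:
  assumes "T \<in> (BadS n k \<delta> \<alpha> :: (nat \<Rightarrow> 'a::{finite,field}) set set set)"
  shows "\<exists>ws. set ws \<subseteq> Fqn n \<and> length ws = k + \<delta> - 1 \<and> T \<subseteq> Gw ws k"
proof -
  have TG: "T \<subseteq> grass n k" and dT: "V.dim (\<Union>T) < k + \<delta>" using assms by (auto simp: BadS_def)
  have WF: "\<Union>T \<subseteq> Fqn n" using TG by (auto simp: grass_def)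
  obtain B where B: "B \<subseteq> \<Union>T" "V.independent B" "\<Union>T \<subseteq> V.span B" "card B = V.dim (\<Union>T)"
    using V.basis_exists by blast
  have "finite B" using B(1) WF Fqn_finite finite_subset by metis
  then obtain xs where xs: "set xs = B" "distinct xs" using finite_distinct_list by blast
  have lxs: "length xs \<le> k + \<delta> - 1" using xs B(4) dT distinct_card by fastforce
  define ws where "ws = xs @ replicate (k + \<delta> - 1 - length xs) 0"
  have "set ws \<subseteq> Fqn n" unfolding ws_def using xs B(1) WF by (auto simp: Fqn_def)
  moreover have "length ws = k + \<delta> - 1" unfolding ws_def using lxs by simp
  moreover have "T \<subseteq> Gw ws k"
  proof
    fix U assume U: "U \<in> T"
    then have G: "U \<in> grass n k" using TG by auto
    obtain ys where ys: "set ys \<subseteq> U" "length ys = k" "U \<subseteq> V.span (set ys)"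
      using grass_basis_list[OF G] by blast
    have "V.span (set ys) \<subseteq> U" using ys(1) G V.span_minimal unfolding grass_def by blast
    then have Ueq: "U = V.span (set ys)" using ys(3) by auto
    have "set ys \<subseteq> V.span B" using ys(1) U B(3) by auto
    also have "V.span B \<subseteq> V.span (set ws)" unfolding ws_def using xs by (intro V.span_mono) auto
    finally have "set ys \<subseteq> V.span (set ws)" .
    then show "U \<in> Gw ws k" unfolding Gw_def using Ueq ys(2) by blast
  qed
  ultimately show ?thesis by blast
qed

lemma bad_card:
  "card (BadS n k \<delta> \<alpha> :: (nat \<Rightarrow> 'a::{finite,field}) set set set)
     \<le> (CARD('a) ^ n) ^ (k + \<delta> - 1) * 2 ^ ((CARD('a) ^ (k + \<delta> - 1)) ^ k)"
proof -
  define d where "d = k + \<delta> - 1"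
  define L where "L = {ws. set ws \<subseteq> (Fqn n :: (nat \<Rightarrow> 'a) set) \<and> length ws = d}"
  have finL: "finite L" unfolding L_def using Fqn_finite[where 'a='a] by (simp add: finite_lists_length_eq)
  have cardL: "card L = (CARD('a) ^ n) ^ d" unfolding L_def
    using Fqn_finite[where 'a='a] Fqn_card[where 'a='a] by (simp add: card_lists_length_eq)
  have fG: "finite (Gw ws k)" if "ws \<in> L" for ws
  proof -
    have "Gw ws k \<subseteq> Pow (Fqn n)"
    proof
      fix U assume "U \<in> Gw ws k"
      then obtain xs where xs: "U = V.span (set xs)" "set xs \<subseteq> V.span (set ws)" unfolding Gw_def by blast
      have "V.span (set ws) \<subseteq> Fqn n" using that unfolding L_def by (intro span_sub_Fqn) auto
      then have "set xs \<subseteq> Fqn n" using xs(2) by (rule_tac order_trans) auto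
      then have "V.span (set xs) \<subseteq> Fqn n" by (rule span_sub_Fqn)
      then show "U \<in> Pow (Fqn n)" using xs(1) by simp
    qed
    moreover have "finite (Pow (Fqn n :: (nat \<Rightarrow> 'a) set))" using Fqn_finite by simp
    ultimately show ?thesis by (rule finite_subset)
  qed
  have "(BadS n k \<delta> \<alpha> :: (nat \<Rightarrow> 'a) set set set) \<subseteq> (\<Union>ws\<in>L. Pow (Gw ws k))"
  proof
    fix T :: "(nat \<Rightarrow> 'a) set set" assume "T \<in> BadS n k \<delta> \<alpha>"
    then have "\<exists>ws. set ws \<subseteq> Fqn n \<and> length ws = k + \<delta> - 1 \<and> T \<subseteq> Gw ws k" by (rule bad_in_Gw)
    then obtain ws where "set ws \<subseteq> Fqn n" "length ws = d" "T \<subseteq> Gw ws k"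
      unfolding d_def by blast
    then show "T \<in> (\<Union>ws\<in>L. Pow (Gw ws k))" unfolding L_def by blast
  qed
  then have "card (BadS n k \<delta> \<alpha> :: (nat \<Rightarrow> 'a) set set set) \<le> card (\<Union>ws\<in>L. Pow (Gw ws k))"
    by (intro card_mono) (auto simp: finL fG)
  also have "\<dots> \<le> (\<Sum>ws\<in>L. card (Pow (Gw ws k)))" by (rule card_UN_le[OF finL])
  also have "\<dots> \<le> (\<Sum>ws\<in>L. 2 ^ ((CARD('a) ^ d) ^ k))"
  proof (rule sum_mono)
    fix ws assume ws: "ws \<in> L"
    have "card (Pow (Gw ws k)) = 2 ^ card (Gw ws k)" using fG[OF ws] by (simp add: card_Pow)
    also have "\<dots> \<le> 2 ^ ((CARD('a) ^ d) ^ k)" using Gw_card[of ws n d k] ws unfolding L_def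
      by (intro power_increasing) auto
    finally show "card (Pow (Gw ws k)) \<le> 2 ^ ((CARD('a) ^ d) ^ k)" .
  qed
  also have "\<dots> = (CARD('a) ^ n) ^ d * 2 ^ ((CARD('a) ^ d) ^ k)" using cardL by simp
  finally show ?thesis unfolding d_def .
qed

lemma card_field_ge2: "2 \<le> CARD('a::{finite,field})"
proof -
  have "card {0::'a, 1} = 2" by simp
  moreover have "card {0::'a, 1} \<le> CARD('a)" by (rule card_mono) auto
  ultimately show ?thesis by simp
qed

definition Kc :: "nat \<Rightarrow> nat \<Rightarrow> nat \<Rightarrow> nat" where "Kc q k \<delta> = 2 ^ ((q ^ (k + \<delta> - 1)) ^ k)"
definition cc :: "nat \<Rightarrow> nat \<Rightarrow> nat \<Rightarrow> nat" where "cc q k \<delta> = 2 * Kc q k \<delta> * q ^ (k * k)"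
definition Dc :: "nat \<Rightarrow> nat \<Rightarrow> nat \<Rightarrow> nat" where "Dc q k \<delta> = cc q k \<delta> * q ^ (k * k)"

lemma lower_code:
  assumes a2: "2 \<le> \<alpha>" and dt: "\<delta> = (\<alpha> - 1) * t + 1" and tk: "t < k" and nk: "k \<le> n"
    and big: "Dc CARD('a::{finite,field}) k \<delta> * (\<alpha> + 2) \<le> CARD('a) ^ ((k - t) * n)"
  shows "\<exists>C. covering_code n k \<delta> \<alpha> (C :: (nat \<Rightarrow> 'a) set set) \<and>
           CARD('a) ^ ((k - t) * n) \<le> 4 * Dc CARD('a) k \<delta> * card C"
proof -
  define q where "q = CARD('a)"
  define K where "K = Kc q k \<delta>"
  define c where "c = cc q k \<delta>"
  define D where "D = Dc q k \<delta>"
  define m where "m = card (grass n k :: (nat \<Rightarrow> 'a) set set)"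
  define Q where "Q = q ^ (n * t)"
  define s where "s = m div (c * Q)"
  have q2: "2 \<le> q" unfolding q_def by (rule card_field_ge2)
  have Kpos: "1 \<le> K" unfolding K_def Kc_def by simp
  have c_def': "c = 2 * K * q ^ (k * k)" unfolding c_def K_def cc_def by simp
  have D_def': "D = c * q ^ (k * k)" unfolding D_def c_def Dc_def by simp
  have qkk: "0 < q ^ (k * k)" using q2 by simp
  have c1: "1 \<le> c" unfolding c_def' using Kpos qkk by (simp add: Suc_le_eq)
  have Qpos: "0 < Q" unfolding Q_def using q2 by simp
  have cQ: "0 < c * Q" using c1 Qpos by simp
  have h1: "s * (c * Q) \<le> m" unfolding s_def by (rule div_times_less_eq_dividend)
  have h2: "m < (s + 1) * (c * Q)"
  proof -
    have "m = s * (c * Q) + m mod (c * Q)" unfolding s_def by (rule div_mult_mod_eq[symmetric])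
    moreover have "m mod (c * Q) < c * Q" using cQ by simp
    ultimately show ?thesis by (simp add: algebra_simps)
  qed
  have mlow: "q ^ (k * (n - k)) \<le> m"
  proof -
    have "(q ^ (n - k)) ^ k \<le> m" unfolding m_def q_def by (rule grass_card_lower[OF nk])
    then show ?thesis by (simp add: power_mult[symmetric] mult.commute)
  qed
  have e1: "q ^ ((k - t) * n) * Q = q ^ (k * (n - k)) * q ^ (k * k)"
  proof -
    have "(k - t) * n + n * t = k * (n - k) + k * k"
    proof -
      have "(k - t) * n + n * t = k * n" using tk by (simp add: diff_mult_distrib algebra_simps)
      also have "\<dots> = k * (n - k) + k * k" using nk by (simp add: diff_mult_distrib2)
      finally show ?thesis .
    qed
    then show ?thesis unfolding Q_def by (simp add: power_add[symmetric])
  qed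
  have "q ^ ((k - t) * n) * Q \<le> m * q ^ (k * k)" unfolding e1 using mlow by simp
  also have "\<dots> < (s + 1) * (c * Q) * q ^ (k * k)" using h2 qkk by simp
  also have "\<dots> = ((s + 1) * D) * Q" unfolding D_def' by (simp add: algebra_simps)
  finally have low: "q ^ ((k - t) * n) < (s + 1) * D" using Qpos by simp
  have "D * (\<alpha> + 2) < D * (s + 1)" using big low unfolding q_def D_def by (simp add: ac_simps)
  then have sa: "\<alpha> + 2 < s + 1" by (meson mult_less_cancel1)
  have sm: "s \<le> m" unfolding s_def by simp
  define Bad where "Bad = (BadS n k \<delta> \<alpha> :: (nat \<Rightarrow> 'a) set set set)"
  have cB: "card Bad \<le> (q ^ n) ^ (k + \<delta> - 1) * K"
    unfolding Bad_def q_def K_def Kc_def by (rule bad_card)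
  have e2: "(q ^ n) ^ (k + \<delta> - 1) = q ^ (n * k) * Q ^ (\<alpha> - 1)"
  proof -
    have "n * (k + \<delta> - 1) = n * k + n * t * (\<alpha> - 1)" using dt by (simp add: algebra_simps)
    then show ?thesis unfolding Q_def by (simp add: power_mult[symmetric] power_add)
  qed
  have cond: "2 * card Bad * s ^ \<alpha> \<le> s * m ^ \<alpha>"
  proof -
    have sA: "s ^ \<alpha> = s ^ (\<alpha> - 1) * s" using a2 by (metis Suc_diff_1 less_le_trans pos2 power_Suc2)
    have mA: "m ^ \<alpha> = m * m ^ (\<alpha> - 1)" using a2 by (metis Suc_diff_1 less_le_trans pos2 power_Suc)
    have cpow: "c \<le> c ^ (\<alpha> - 1)" using c1 a2
      by (metis One_nat_def Suc_le_eq diff_Suc_1 le_numeral_extra(4) le_simps(3) not_less_eq_eq numeral_2_eq_2 power_increasing power_one_right zero_less_diff)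
    have "2 * card Bad * s ^ \<alpha> * q ^ (k * k) \<le> 2 * ((q ^ n) ^ (k + \<delta> - 1) * K) * s ^ \<alpha> * q ^ (k * k)"
      using cB by simp
    also have "\<dots> = q ^ (n * k) * c * (Q * s) ^ (\<alpha> - 1) * s"
      unfolding e2 c_def' sA by (simp add: power_mult_distrib ac_simps)
    also have "\<dots> \<le> q ^ (n * k) * c ^ (\<alpha> - 1) * (Q * s) ^ (\<alpha> - 1) * s"
      using cpow by (intro mult_right_mono mult_left_mono) auto
    also have "\<dots> = q ^ (n * k) * (s * (c * Q)) ^ (\<alpha> - 1) * s"
      by (simp add: power_mult_distrib ac_simps)
    also have "\<dots> \<le> q ^ (n * k) * m ^ (\<alpha> - 1) * s"
      using h1 by (intro mult_right_mono mult_left_mono power_mono) auto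
    also have "q ^ (n * k) = q ^ (k * (n - k)) * q ^ (k * k)"
    proof -
      have "n * k = k * (n - k) + k * k" using nk by (simp add: diff_mult_distrib2 mult.commute)
      then show ?thesis by (simp add: power_add)
    qed
    also have "q ^ (k * (n - k)) * q ^ (k * k) * m ^ (\<alpha> - 1) * s \<le> m * q ^ (k * k) * m ^ (\<alpha> - 1) * s"
      using mlow by (intro mult_right_mono) auto
    also have "\<dots> = s * m ^ \<alpha> * q ^ (k * k)" unfolding mA by (simp add: ac_simps)
    finally show ?thesis using qkk by (metis mult_le_cancel2)
  qed
  have BadV: "Bad \<subseteq> {T. T \<subseteq> grass n k \<and> card T = \<alpha>}" unfolding Bad_def BadS_def by auto
  obtain F where F: "F \<subseteq> grass n k" "s \<le> 2 * card F" "\<forall>T\<in>Bad. \<not> T \<subseteq> F"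
    using deletion[OF grass_finite BadV _ _ _ cond[unfolded m_def]] a2 sa sm unfolding m_def by auto
  have "covering_code n k \<delta> \<alpha> F"
    unfolding covering_code_def
  proof (intro conjI allI impI)
    show "F \<subseteq> grass n k" by (rule F(1))
    fix S assume S: "S \<subseteq> F" "card S = \<alpha>"
    show "k + \<delta> \<le> V.dim (V.span (\<Union>S))"
    proof (rule ccontr)
      assume "\<not> k + \<delta> \<le> V.dim (V.span (\<Union>S))"
      then have "S \<in> Bad" using S F(1) unfolding Bad_def BadS_def by auto
      then show False using F(3) S by auto
    qed
  qed
  moreover have "q ^ ((k - t) * n) \<le> 4 * D * card F"
  proof -
    have "q ^ ((k - t) * n) \<le> (s + 1) * D" using low by simp
    also have "\<dots> \<le> (2 * s) * D" using sa by (intro mult_right_mono) auto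
    also have "\<dots> \<le> (2 * (2 * card F)) * D" using F(2) by (intro mult_right_mono) auto
    finally show ?thesis by (simp add: ac_simps)
  qed
  ultimately show ?thesis unfolding q_def D_def by blast
qed

lemma codes_finite: "finite {C :: (nat \<Rightarrow> 'a::{finite,field}) set set. covering_code n k \<delta> \<alpha> C}"
proof -
  have "{C :: (nat \<Rightarrow> 'a) set set. covering_code n k \<delta> \<alpha> C} \<subseteq> Pow (grass n k)"
    by (auto simp: covering_code_def)
  then show ?thesis using grass_finite finite_Pow_iff finite_subset by metis
qed

lemma Bq_ge:
  assumes "covering_code n k \<delta> \<alpha> (C :: (nat \<Rightarrow> 'a::{finite,field}) set set)"
  shows "card C \<le> Bq TYPE('a) n k \<delta> \<alpha>"
proof -
  have "finite (card ` {C :: (nat \<Rightarrow> 'a) set set. covering_code n k \<delta> \<alpha> C})"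
    by (rule finite_imageI[OF codes_finite])
  then show ?thesis unfolding Bq_def using assms by (intro Max_ge) auto
qed

lemma Bq_le:
  assumes "\<And>C :: (nat \<Rightarrow> 'a::{finite,field}) set set. covering_code n k \<delta> \<alpha> C \<Longrightarrow> card C \<le> b"
    and "0 < \<alpha>"
  shows "Bq TYPE('a) n k \<delta> \<alpha> \<le> b"
proof -
  have "covering_code n k \<delta> \<alpha> ({} :: (nat \<Rightarrow> 'a) set set)"
    using assms(2) by (auto simp: covering_code_def)
  then have "{C :: (nat \<Rightarrow> 'a) set set. covering_code n k \<delta> \<alpha> C} \<noteq> {}" by blast
  moreover have "finite (card ` {C :: (nat \<Rightarrow> 'a) set set. covering_code n k \<delta> \<alpha> C})"
    by (rule finite_imageI[OF codes_finite])
  ultimately show ?thesis unfolding Bq_def using assms(1) by (subst Max_le_iff) auto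
qed

theorem mainTheorem15:
  fixes k \<delta> \<alpha> :: nat
  assumes "0 < k" and "0 < \<delta>" and "2 \<le> \<alpha>" and "\<delta> \<le> (\<alpha> - 1) * k"
    and "(\<alpha> - 1) dvd (\<delta> - 1)"
  shows "(\<lambda>n. real (Bq TYPE('a::{finite,field}) n k \<delta> \<alpha>))
           \<in> \<Theta>(\<lambda>n. real CARD('a) powr ((real k - (real \<delta> - 1) / (real \<alpha> - 1)) * real n))"
proof -
  define q where "q = CARD('a)"
  define t where "t = (\<delta> - 1) div (\<alpha> - 1)"
  define D where "D = Dc q k \<delta>"
  have q2: "2 \<le> q" unfolding q_def by (rule card_field_ge2)
  have tm: "(\<alpha> - 1) * t = \<delta> - 1" unfolding t_def using assms(5) by simp
  have dt: "\<delta> = (\<alpha> - 1) * t + 1" using tm assms(2) by simp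
  have tk: "t < k"
  proof -
    have "(\<alpha> - 1) * t < (\<alpha> - 1) * k" using tm assms(2,4) by linarith
    then show ?thesis by (meson mult_less_cancel1)
  qed
  have expo: "real k - (real \<delta> - 1) / (real \<alpha> - 1) = real (k - t)"
  proof -
    have "real \<delta> - 1 = (real \<alpha> - 1) * real t"
      using dt assms(3) by (simp add: of_nat_diff)
    moreover have "real \<alpha> - 1 > 0" using assms(3) by simp
    ultimately have "(real \<delta> - 1) / (real \<alpha> - 1) = real t" by simp
    then show ?thesis using tk by (simp add: of_nat_diff)
  qed
  have g: "real q powr (real (k - t) * real n) = real (q ^ ((k - t) * n))" for n
  proof -
    have "real q powr (real (k - t) * real n) = real q powr (real ((k - t) * n))" by simp
    also have "\<dots> = real q ^ ((k - t) * n)" using q2 by (intro powr_realpow) simp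
    finally show ?thesis by simp
  qed
  have Dpos: "0 < D" unfolding D_def Dc_def cc_def Kc_def using q2 by simp
  show ?thesis unfolding expo q_def[symmetric]
  proof (rule bigthetaI'[of "1 / (4 * real D)" "real (\<alpha> - 1)"])
    show "0 < 1 / (4 * real D)" using Dpos by simp
    show "0 < real (\<alpha> - 1)" using assms(3) by simp
    have ev: "eventually (\<lambda>n. max k (D * (\<alpha> + 2)) \<le> n) at_top" by (rule eventually_ge_at_top)
    show "\<forall>\<^sub>F n in at_top.
            1 / (4 * real D) * norm (real q powr (real (k - t) * real n)) \<le> norm (real (Bq TYPE('a) n k \<delta> \<alpha>)) \<and>
            norm (real (Bq TYPE('a) n k \<delta> \<alpha>)) \<le> real (\<alpha> - 1) * norm (real q powr (real (k - t) * real n))"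
      using ev
    proof eventually_elim
      case (elim n)
      have nk: "k \<le> n" using elim by simp
      have "D * (\<alpha> + 2) \<le> n" using elim by simp
      also have "n < 2 ^ n" by (rule less_exp)
      also have "(2::nat) ^ n \<le> q ^ n" using q2 by (rule power_mono) simp
      also have "q ^ n \<le> q ^ ((k - t) * n)" using q2 tk by (intro power_increasing) auto
      finally have big: "Dc CARD('a) k \<delta> * (\<alpha> + 2) \<le> CARD('a) ^ ((k - t) * n)"
        unfolding D_def q_def by simp
      obtain C where C: "covering_code n k \<delta> \<alpha> (C :: (nat \<Rightarrow> 'a) set set)"
        "CARD('a) ^ ((k - t) * n) \<le> 4 * Dc CARD('a) k \<delta> * card C"
        using lower_code[OF assms(3) dt tk nk big] by blast
      have lo: "q ^ ((k - t) * n) \<le> 4 * D * Bq TYPE('a) n k \<delta> \<alpha>"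
        using C(2) Bq_ge[OF C(1)] unfolding q_def D_def
        by (meson le_trans mult_le_mono2)
      have up: "Bq TYPE('a) n k \<delta> \<alpha> \<le> (\<alpha> - 1) * q ^ ((k - t) * n)"
      proof (rule Bq_le)
        fix C :: "(nat \<Rightarrow> 'a) set set" assume "covering_code n k \<delta> \<alpha> C"
        then have "card C \<le> (\<alpha> - 1) * (CARD('a) ^ n) ^ (k - t)"
          by (rule upper_bound[OF _ assms(3) dt tk])
        then show "card C \<le> (\<alpha> - 1) * q ^ ((k - t) * n)"
          unfolding q_def by (simp add: power_mult[symmetric] mult.commute)
      qed (use assms(3) in simp)
      have lo': "1 / (4 * real D) * real (q ^ ((k - t) * n)) \<le> real (Bq TYPE('a) n k \<delta> \<alpha>)"
      proof -
        have "real (q ^ ((k - t) * n)) \<le> 4 * real D * real (Bq TYPE('a) n k \<delta> \<alpha>)"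
          using lo by (metis of_nat_le_iff of_nat_mult of_nat_numeral)
        then show ?thesis using Dpos by (simp add: field_simps)
      qed
      have up': "real (Bq TYPE('a) n k \<delta> \<alpha>) \<le> real (\<alpha> - 1) * real (q ^ ((k - t) * n))"
        using up by (metis of_nat_le_iff of_nat_mult)
      show ?case unfolding g using lo' up' by simp
    qed
  qed
qed

end
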